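(* Let $d\ge1$, $\kappa\ge1$, $\theta>0$ and $\eta\in\mathbb R$, and for $i\ge2$ let $N_i=\lfloor i^\kappa(\log i)^\eta\rfloor$. Then $$\sum_{i=2}^\infty\ \sum_{\{\mathbf n\in\mathbb Z_+^d:\ |\mathbf n|=N_i\}}\frac1{|\mathbf n|^\theta}=\sum_{i=2}^\infty\frac{d(N_i)}{N_i^{\theta}}\ \begin{cases}<\infty,&\theta>1/\kappa,\\=\infty,&\theta<1/\kappa.\end{cases}$$
   Context: $\mathbb Z_+^d$ is the set of $d$-tuples of positive integers; $|\mathbf n|=\prod_{k=1}^d n_k$. For a positive integer $j$, $d(j)=\operatorname{Card}\{\mathbf k\in\mathbb Z_+^d:|\mathbf k|=j\}$ (terms with $N_i=0$, which occur for at most finitely many $i$, are omitted). *)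

theory Defs
  imports "HOL-Analysis.Analysis"
begin

definition tuples_prod :: "nat \<Rightarrow> nat \<Rightarrow> nat list set" where
  "tuples_prod d j = {ks. length ks = d \<and> (\<forall>k\<in>set ks. k > 0) \<and> prod_list ks = j}"

definition dfun :: "nat \<Rightarrow> nat \<Rightarrow> nat" where
  "dfun d j = card (tuples_prod d j)"

definition Nseq :: "real \<Rightarrow> real \<Rightarrow> nat \<Rightarrow> nat" where
  "Nseq \<kappa> \<eta> i = nat \<lfloor>real i powr \<kappa> * ln (real i) powr \<eta>\<rfloor>"

end

theory Submission imports Defs "HOL-Real_Asymp.Real_Asymp" "HOL-Computational_Algebra.Primes" begin

definition tau :: "nat \<Rightarrow> nat" where "tau n = card {k. k dvd n}"

lemma tau_mult_le:
  assumes "x > 0" "y > 0" shows "tau (x * y) \<le> tau x * tau y"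
proof -
  have "{k. k dvd x * y} \<subseteq> (\<lambda>(u,v). u * v) ` ({u. u dvd x} \<times> {v. v dvd y})"
  proof
    fix k assume "k \<in> {k. k dvd x * y}"
    then obtain u v where "k = u * v" "u dvd x" "v dvd y" by (auto elim: dvd_productE)
    thus "k \<in> (\<lambda>(u,v). u * v) ` ({u. u dvd x} \<times> {v. v dvd y})" by force
  qed
  hence "tau (x*y) \<le> card ((\<lambda>(u,v). u * v) ` ({u. u dvd x} \<times> {v. v dvd y}))"
    unfolding tau_def using assms by (intro card_mono) (auto intro: finite_divisors_nat)
  also have "\<dots> \<le> card ({u. u dvd x} \<times> {v. v dvd y})" by (rule card_image_le) (use assms in \<open>auto intro: finite_divisors_nat\<close>)
  also have "\<dots> = tau x * tau y" by (simp add: tau_def card_cartesian_product)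
  finally show ?thesis .
qed

lemma tau_primepow: assumes "prime (p::nat)" shows "tau (p ^ a) \<le> a + 1"
proof -
  have "{k. k dvd p ^ a} \<subseteq> (\<lambda>j. p ^ j) ` {..a}"
    using assms by (auto simp: divides_primepow_nat)
  hence "tau (p^a) \<le> card ((\<lambda>j. p ^ j) ` {..a})" unfolding tau_def by (intro card_mono) auto
  also have "\<dots> \<le> card {..a}" by (rule card_image_le) auto
  finally show ?thesis by simp
qed

lemma small_factor: assumes "\<epsilon> > 0" shows "real (a + 1) \<le> (1 + 1 / (\<epsilon> * ln 2)) * 2 powr (real a * \<epsilon>)"
proof -
  define c where "c = \<epsilon> * ln 2"
  have c: "c > 0" using assms by (simp add: c_def)
  have "2 powr (real a * \<epsilon>) = exp (real a * c)" by (simp add: powr_def c_def)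
  also have "\<dots> \<ge> 1 + real a * c" by (rule exp_ge_add_one_self)
  finally have e: "2 powr (real a * \<epsilon>) \<ge> 1 + real a * c" .
  have "real (a+1) \<le> (1 + 1/c) * (1 + real a * c)"
    using c by (simp add: field_simps)
  also have "\<dots> \<le> (1 + 1/c) * 2 powr (real a * \<epsilon>)"
    using e c by (intro mult_left_mono) auto
  finally show ?thesis by (simp add: c_def)
qed

lemma divisor_bound:
  assumes eps: "\<epsilon> > 0" shows "\<exists>C. \<forall>n>0. real (tau n) \<le> C * real n powr \<epsilon>"
proof -
  define K where "K = 1 + 1 / (\<epsilon> * ln 2)"
  define M where "M = nat \<lceil>2 powr (1/\<epsilon>)\<rceil>"
  have K1: "K \<ge> 1" using eps by (simp add: K_def)
  have claim: "\<forall>n>0. (\<forall>p. prime p \<and> p dvd n \<longrightarrow> p < B) \<longrightarrow> real (tau n) \<le> K ^ (min B M) * real n powr \<epsilon>" for B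
  proof (induction B)
    case 0
    show ?case
    proof (intro allI impI)
      fix n :: nat assume "n > 0" "\<forall>p. prime p \<and> p dvd n \<longrightarrow> p < 0"
      hence "n = 1" by (metis less_nat_zero_code prime_factor_nat neq0_conv)
      thus "real (tau n) \<le> K ^ (min 0 M) * real n powr \<epsilon>" by (simp add: tau_def)
    qed
  next
    case (Suc B)
    show ?case
    proof (intro allI impI)
      fix n :: nat assume n: "n > 0" and pr: "\<forall>p. prime p \<and> p dvd n \<longrightarrow> p < Suc B"
      show "real (tau n) \<le> K ^ (min (Suc B) M) * real n powr \<epsilon>"
      proof (cases "prime B")
        case False
        with pr have "\<forall>p. prime p \<and> p dvd n \<longrightarrow> p < B" using less_SucE by blast
        with Suc.IH n have "real (tau n) \<le> K ^ (min B M) * real n powr \<epsilon>" by blast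
        also have "\<dots> \<le> K ^ (min (Suc B) M) * real n powr \<epsilon>"
          using K1 by (intro mult_right_mono power_increasing) auto
        finally show ?thesis .
      next
        case True
        obtain m where nm: "n = B ^ multiplicity B n * m" "\<not> B dvd m" using n True by (metis multiplicity_decompose' not_prime_unit neq0_conv)
        define a where "a = multiplicity B n"
        have nm': "n = B ^ a * m" using nm a_def by simp
        have m0: "m > 0" using n nm' by (cases m) auto
        have B2: "B \<ge> 2" using True prime_ge_2_nat by blast
        have "\<forall>p. prime p \<and> p dvd m \<longrightarrow> p < B"
        proof (intro allI impI)
          fix p assume "prime p \<and> p dvd m"
          hence "p dvd n" "p \<noteq> B" "prime p" using nm' nm(2) by auto
          with pr show "p < B" by (metis less_SucE)
        qed
        with Suc.IH m0 have IH: "real (tau m) \<le> K ^ (min B M) * real m powr \<epsilon>" by blast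
        have "tau n \<le> tau (B^a) * tau m" unfolding nm' using B2 m0 by (intro tau_mult_le) auto
        also have "\<dots> \<le> (a+1) * tau m" using tau_primepow[OF True] by (intro mult_right_mono) auto
        finally have t1: "real (tau n) \<le> real (a+1) * real (tau m)" by (metis of_nat_le_iff of_nat_mult)
        define K' where "K' = (if B < M then K else 1)"
        have fa: "real (a+1) \<le> K' * real B powr (real a * \<epsilon>)"
        proof (cases "B < M")
          case True
          have "real (a + 1) \<le> K * 2 powr (real a * \<epsilon>)" unfolding K_def by (rule small_factor[OF eps])
          also have "\<dots> \<le> K * real B powr (real a * \<epsilon>)"
            using K1 B2 eps by (intro mult_left_mono powr_mono2) auto
          finally show ?thesis using True by (simp add: K'_def)
        next
          case False
          hence "real B \<ge> 2 powr (1/\<epsilon>)" unfolding M_def by linarith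
          hence "real B powr \<epsilon> \<ge> (2 powr (1/\<epsilon>)) powr \<epsilon>" using eps by (intro powr_mono2) auto
          hence Be: "real B powr \<epsilon> \<ge> 2" using eps by (simp add: powr_powr)
          have "real (a+1) \<le> 2 ^ a" by (induction a) auto
          also have "\<dots> \<le> (real B powr \<epsilon>) ^ a" using Be by (intro power_mono) auto
          also have "\<dots> = real B powr (real a * \<epsilon>)" using B2 by (subst powr_power) auto
          finally show ?thesis using False by (simp add: K'_def)
        qed
        have KK: "K' * K ^ (min B M) \<le> K ^ (min (Suc B) M)"
          using K1 by (cases "B < M") (auto simp: K'_def min_def intro: power_increasing)
        have "real (tau n) \<le> real (a+1) * (K ^ (min B M) * real m powr \<epsilon>)"
          using t1 IH by (meson mult_left_mono of_nat_0_le_iff order_trans)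
        also have "\<dots> \<le> (K' * real B powr (real a * \<epsilon>)) * (K ^ (min B M) * real m powr \<epsilon>)"
          using K1 by (intro mult_right_mono fa) auto
        also have "\<dots> = (K' * K ^ (min B M)) * (real B powr (real a * \<epsilon>) * real m powr \<epsilon>)" by simp
        also have "real B powr (real a * \<epsilon>) * real m powr \<epsilon> = real n powr \<epsilon>"
        proof -
          have "real B ^ a = real B powr real a" using B2 by (simp add: powr_realpow)
          hence "real B powr (real a * \<epsilon>) = (real B ^ a) powr \<epsilon>" by (simp add: powr_powr)
          thus ?thesis using B2 m0 by (simp add: nm' powr_mult)
        qed
        also have "(K' * K ^ (min B M)) * real n powr \<epsilon> \<le> K ^ (min (Suc B) M) * real n powr \<epsilon>"
          using KK by (intro mult_right_mono) auto
        finally show ?thesis by simp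
      qed
    qed
  qed
  show ?thesis
  proof (intro exI allI impI)
    fix n :: nat assume n: "n > 0"
    have "\<forall>p. prime p \<and> p dvd n \<longrightarrow> p < Suc n" using n by (auto dest: dvd_imp_le)
    with claim n have "real (tau n) \<le> K ^ (min (Suc n) M) * real n powr \<epsilon>" by blast
    also have "\<dots> \<le> K ^ M * real n powr \<epsilon>" using K1 by (intro mult_right_mono power_increasing) auto
    finally show "real (tau n) \<le> K ^ M * real n powr \<epsilon>" .
  qed
qed

lemma tuples_finite: assumes "n > 0" shows "finite (tuples_prod d n)"
proof -
  have "tuples_prod d n \<subseteq> {xs. set xs \<subseteq> {..n} \<and> length xs = d}"
    using assms by (auto simp: tuples_prod_def dest!: prod_list_dvd intro: dvd_imp_le)
  thus ?thesis by (rule finite_subset) (rule finite_lists_length_eq, simp)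
qed

lemma dfun_ge1: assumes "n > 0" "d \<ge> 1" shows "dfun d n \<ge> 1"
proof -
  have "n # replicate (d-1) 1 \<in> tuples_prod d n" using assms by (auto simp: tuples_prod_def)
  hence "tuples_prod d n \<noteq> {}" by blast
  thus ?thesis unfolding dfun_def using tuples_finite[OF assms(1)]
    by (simp add: Suc_le_eq card_gt_0_iff)
qed

lemma dfun_le: assumes "n > 0" "d \<ge> 1" shows "dfun d n \<le> tau n ^ (d - 1)"
proof -
  have "card (tuples_prod d n) \<le> card {xs. set xs \<subseteq> {k. k dvd n} \<and> length xs = d - 1}"
  proof (rule card_inj_on_le[where f = butlast])
    show "inj_on butlast (tuples_prod d n)"
    proof
      fix xs ys assume xs: "xs \<in> tuples_prod d n" and ys: "ys \<in> tuples_prod d n" and e: "butlast xs = butlast ys"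
      have lx: "xs \<noteq> []" "ys \<noteq> []" using xs ys assms by (auto simp: tuples_prod_def)
      have px: "prod_list (butlast xs) * last xs = n"
      proof -
        have "prod_list (butlast xs @ [last xs]) = prod_list (butlast xs) * last xs" by simp
        thus ?thesis using xs lx by (simp add: tuples_prod_def)
      qed
      have py: "prod_list (butlast ys) * last ys = n"
      proof -
        have "prod_list (butlast ys @ [last ys]) = prod_list (butlast ys) * last ys" by simp
        thus ?thesis using ys lx by (simp add: tuples_prod_def)
      qed
      have "prod_list (butlast xs) \<noteq> 0" using px assms by auto
      hence "last xs = last ys" using px py e by (metis mult_left_cancel)
      thus "xs = ys" using e lx by (metis append_butlast_last_id)
    qed
    show "butlast ` tuples_prod d n \<subseteq> {xs. set xs \<subseteq> {k. k dvd n} \<and> length xs = d - 1}"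
      by (auto simp: tuples_prod_def intro!: prod_list_dvd dest!: in_set_butlastD)
    show "finite {xs. set xs \<subseteq> {k. k dvd n} \<and> length xs = d - 1}"
      using assms by (intro finite_lists_length_eq finite_divisors_nat) auto
  qed
  moreover have "finite {k. k dvd n}" using assms by (intro finite_divisors_nat) auto
  ultimately show ?thesis by (simp add: dfun_def card_lists_length_eq tau_def)
qed

theorem lemma3p3:
  fixes d :: nat and \<kappa> \<theta> \<eta> :: real
  assumes "d \<ge> 1" and "\<kappa> \<ge> 1" and "\<theta> > 0"
  defines "N \<equiv> Nseq \<kappa> \<eta>"
  defines "f \<equiv> (\<lambda>i::nat. if i \<ge> 2 \<and> N i \<noteq> 0
                then (\<Sum>n\<in>tuples_prod d (N i). 1 / real (prod_list n) powr \<theta>) else 0)"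
  shows "(\<forall>i. f i = (if i \<ge> 2 \<and> N i \<noteq> 0
                      then real (dfun d (N i)) / real (N i) powr \<theta> else 0))
         \<and> (\<theta> > 1 / \<kappa> \<longrightarrow> summable f)
         \<and> (\<theta> < 1 / \<kappa> \<longrightarrow> \<not> summable f)"
proof -
  note d1 = assms(1) and k1 = assms(2) and th = assms(3)
  have feq: "f i = (if i \<ge> 2 \<and> N i \<noteq> 0
                      then real (dfun d (N i)) / real (N i) powr \<theta> else 0)" for i
  proof (cases "i \<ge> 2 \<and> N i \<noteq> 0")
    case True
    have "(\<Sum>n\<in>tuples_prod d (N i). 1 / real (prod_list n) powr \<theta>)
          = (\<Sum>n\<in>tuples_prod d (N i). 1 / real (N i) powr \<theta>)"
      by (rule sum.cong) (auto simp: tuples_prod_def)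
    also have "\<dots> = real (dfun d (N i)) / real (N i) powr \<theta>" by (simp add: dfun_def)
    finally show ?thesis using True by (simp add: f_def)
  qed (auto simp: f_def)
  define g where "g i = real i powr \<kappa> * ln (real i) powr \<eta>" for i :: nat
  have g0: "g i \<ge> 0" for i by (simp add: g_def)
  have Ng: "real (N i) \<le> g i \<and> g i < real (N i) + 1" for i
  proof -
    have "N i = nat \<lfloor>g i\<rfloor>" by (simp add: N_def Nseq_def g_def)
    hence "real (N i) = of_int \<lfloor>g i\<rfloor>" using g0[of i] by simp
    thus ?thesis by linarith
  qed
  have gbig: "eventually (\<lambda>i. 2 \<le> g i) sequentially"
  proof -
    have "eventually (\<lambda>i::nat. real i powr (-(1/2)) \<le> ln (real i) powr \<eta>) sequentially" by real_asymp
    moreover have "eventually (\<lambda>i::nat. i \<ge> 4) sequentially" by (rule eventually_ge_at_top)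
    ultimately show ?thesis
    proof eventually_elim
      case (elim i)
      have i1: "real i \<ge> 1" using elim by simp
      have "real i powr (1/2) \<le> real i powr (\<kappa> - 1/2)" using i1 k1 by (intro powr_mono) auto
      also have "\<dots> = real i powr \<kappa> * real i powr (-(1/2))" by (simp add: powr_add[symmetric])
      also have "\<dots> \<le> g i" unfolding g_def using elim by (intro mult_left_mono) auto
      finally have "real i powr (1/2) \<le> g i" .
      moreover have "real i powr (1/2) = sqrt (real i)" using i1 by (simp add: powr_half_sqrt)
      moreover have "sqrt (real i) \<ge> 2" using elim real_sqrt_le_mono[of 4 "real i"] by simp
      ultimately show ?case by linarith
    qed
  qed
  have part2: "summable f" if gt: "\<theta> > 1 / \<kappa>"
  proof -
    define \<epsilon> where "\<epsilon> = (\<theta> - 1/\<kappa>) / (2 * real d)"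
    have eps: "\<epsilon> > 0" using gt d1 by (simp add: \<epsilon>_def)
    define \<theta>' where "\<theta>' = \<theta> - real (d - 1) * \<epsilon>"
    have "real (d - 1) * \<epsilon> \<le> real d * \<epsilon>" using eps by (intro mult_right_mono) auto
    also have "real d * \<epsilon> = (\<theta> - 1/\<kappa>) / 2" using d1 by (simp add: \<epsilon>_def)
    finally have th'1: "\<theta>' > 1 / \<kappa>" using gt by (simp add: \<theta>'_def)
    hence th'0: "\<theta>' > 0" using k1 by (smt (verit) divide_pos_pos)
    have kth: "\<kappa> * \<theta>' > 1" using th'1 k1 by (simp add: field_simps)
    define \<delta> where "\<delta> = (\<kappa> * \<theta>' - 1) / 2"
    have del: "\<delta> > 0" using kth by (simp add: \<delta>_def)
    obtain C where C: "\<And>n. n > 0 \<Longrightarrow> real (tau n) \<le> C * real n powr \<epsilon>"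
      using divisor_bound[OF eps] by blast
    have C0: "C \<ge> 0" using C[of 1] by (simp add: tau_def)
    have ev1: "eventually (\<lambda>i::nat. ln (real i) powr (-(\<eta> * \<theta>')) \<le> real i powr \<delta>) sequentially"
      using del by real_asymp
    have "eventually (\<lambda>i. norm (f i) \<le> C ^ (d-1) * 2 powr \<theta>' * real i powr (-(1+\<delta>))) sequentially"
      using ev1 gbig eventually_ge_at_top[of 2]
    proof eventually_elim
      case (elim i)
      have gi: "g i \<ge> 2" "i \<ge> 2" using elim by auto
      have Nr: "real (N i) \<ge> g i / 2" "real (N i) \<ge> 1" using Ng[of i] gi by linarith+
      hence N0: "N i > 0" by simp
      have fi: "f i = real (dfun d (N i)) / real (N i) powr \<theta>" using feq[of i] gi N0 by simp
      have "real (dfun d (N i)) \<le> real (tau (N i)) ^ (d-1)"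
        using dfun_le[OF N0 d1] by (metis of_nat_le_iff of_nat_power)
      also have "\<dots> \<le> (C * real (N i) powr \<epsilon>) ^ (d-1)" using C[OF N0] by (intro power_mono) auto
      also have "\<dots> = C ^ (d-1) * real (N i) powr (real (d-1) * \<epsilon>)"
        using N0 by (simp add: power_mult_distrib powr_power)
      finally have df: "real (dfun d (N i)) \<le> C ^ (d-1) * real (N i) powr (real (d-1) * \<epsilon>)" .
      have "f i \<le> C ^ (d-1) * real (N i) powr (real (d-1) * \<epsilon>) / real (N i) powr \<theta>"
        unfolding fi using df by (intro divide_right_mono) auto
      also have "\<dots> = C ^ (d-1) * real (N i) powr (-\<theta>')"
      proof -
        have "real (N i) powr (real (d-1) * \<epsilon>) / real (N i) powr \<theta> = real (N i) powr (real (d-1) * \<epsilon> - \<theta>)" by (rule powr_diff[symmetric])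
        also have "real (d-1) * \<epsilon> - \<theta> = -\<theta>'" by (simp add: \<theta>'_def)
        finally show ?thesis by (metis times_divide_eq_right)
      qed
      also have "real (N i) powr (-\<theta>') \<le> (g i / 2) powr (-\<theta>')"
        using Nr gi th'0 by (intro powr_mono2') auto
      also have "(g i / 2) powr (-\<theta>') = 2 powr \<theta>' * g i powr (-\<theta>')"
      proof -
        have e: "(g i / 2) powr (-\<theta>') = g i powr (-\<theta>') / 2 powr (-\<theta>')" by (rule powr_divide)
        have "1 / 2 powr (-\<theta>') = (2::real) powr \<theta>'" by (simp add: powr_minus_divide)
        hence "g i powr (-\<theta>') / 2 powr (-\<theta>') = 2 powr \<theta>' * g i powr (-\<theta>')" by (metis times_divide_eq_left mult.commute mult_1)
        thus ?thesis using e by simp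
      qed
      also have "g i powr (-\<theta>') = real i powr (-(\<kappa>*\<theta>')) * ln (real i) powr (-(\<eta>*\<theta>'))"
        unfolding g_def using gi by (simp add: powr_mult powr_powr)
      also have "\<dots> \<le> real i powr (-(\<kappa>*\<theta>')) * real i powr \<delta>"
        using elim by (intro mult_left_mono) auto
      also have "\<dots> = real i powr (-(1+\<delta>))"
      proof -
        have "-(\<kappa>*\<theta>') + \<delta> = -(1+\<delta>)" by (simp add: \<delta>_def field_simps)
        thus ?thesis by (metis powr_add)
      qed
      finally have "f i \<le> C ^ (d-1) * (2 powr \<theta>' * real i powr (-(1+\<delta>)))"
        using C0 by (simp add: mult_left_mono)
      moreover have "f i \<ge> 0" unfolding fi by simp
      ultimately show ?case by (simp add: mult.assoc)
    qed
    moreover have "summable (\<lambda>i. C ^ (d-1) * 2 powr \<theta>' * real i powr (-(1+\<delta>)))"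
      using del by (intro summable_mult) (simp add: summable_real_powr_iff)
    ultimately show ?thesis by (rule summable_comparison_test_ev)
  qed
  have part3: "\<not> summable f" if lt: "\<theta> < 1 / \<kappa>"
  proof
    assume sf: "summable f"
    define \<delta> where "\<delta> = (1 - \<kappa> * \<theta>) / 2"
    have kth: "\<kappa> * \<theta> < 1" using lt k1 by (simp add: field_simps)
    have del: "\<delta> > 0" using kth by (simp add: \<delta>_def)
    have ev1: "eventually (\<lambda>i::nat. ln (real i) powr (\<eta> * \<theta>) \<le> real i powr \<delta>) sequentially"
      using del by real_asymp
    have "eventually (\<lambda>i. norm (real i powr (-1)) \<le> f i) sequentially"
      using ev1 gbig eventually_ge_at_top[of 2]
    proof eventually_elim
      case (elim i)
      have gi: "g i \<ge> 2" "i \<ge> 2" using elim by auto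
      have Nr: "real (N i) \<le> g i" "real (N i) \<ge> 1" using Ng[of i] gi by linarith+
      hence N0: "N i > 0" by simp
      have fi: "f i = real (dfun d (N i)) / real (N i) powr \<theta>" using feq[of i] gi N0 by simp
      have "g i powr \<theta> = real i powr (\<kappa>*\<theta>) * ln (real i) powr (\<eta>*\<theta>)"
        unfolding g_def using gi by (simp add: powr_mult powr_powr)
      also have "\<dots> \<le> real i powr (\<kappa>*\<theta>) * real i powr \<delta>"
        using elim by (intro mult_left_mono) auto
      also have "\<dots> = real i powr (\<kappa>*\<theta> + \<delta>)" by (simp add: powr_add)
      also have "\<dots> \<le> real i powr 1" using gi kth by (intro powr_mono) (auto simp: \<delta>_def field_simps)
      finally have gle: "g i powr \<theta> \<le> real i" using gi by simp
      have "real (N i) powr \<theta> \<le> g i powr \<theta>" using Nr th by (intro powr_mono2) auto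
      also note gle
      finally have Nle: "real (N i) powr \<theta> \<le> real i" .
      have Npos: "real (N i) powr \<theta> > 0" using N0 by simp
      have "real i powr (-1) = 1 / real i" using gi by (simp add: powr_minus_divide)
      also have "\<dots> \<le> 1 / real (N i) powr \<theta>" using Nle Npos gi by (intro divide_left_mono) auto
      also have "\<dots> \<le> real (dfun d (N i)) / real (N i) powr \<theta>"
        using dfun_ge1[OF N0 d1] Npos by (intro divide_right_mono) auto
      finally show ?case using fi by simp
    qed
    hence "summable (\<lambda>i. real i powr (-1))" using sf by (rule summable_comparison_test_ev)
    thus False using summable_real_powr_iff[of "-1"] by simp
  qed
  show ?thesis using feq part2 part3 by blast
qed

end
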